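(* Let $\mathbb{A}$ be a medial algebra over a field $\mathbb{K}$ of characteristic not $2,3$, and let $c$ be a nonzero idempotent of $\mathbb{A}$. Then: (a) $L_c(xy)=L_c(x)L_c(y)$ for all $x,y\in\mathbb{A}$, i.e. $L_c$ is an algebra endomorphism; (b) $\mathbb{A}_c(0)=\ker L_c$ is an ideal of $\mathbb{A}$; (c) $L_c(\mathbb{A})$ is a subalgebra of $\mathbb{A}$; (d) $\mathbb{A}_c(1)=\{x: cx=x\}$ is a subalgebra of $L_c(\mathbb{A})$ and $\dim\mathbb{A}_c(1)\ge 1$; (e) for any nonzero idempotents $c_1,c_2$ of $\mathbb{A}$, $L_{c_2}L_{c_1}=L_{c_2c_1}L_{c_2}$.
   Context: All algebras are commutative, possibly nonassociative, finite-dimensional. Medial: $(xy)(zw)=(xz)(yw)$ for all $x,y,z,w\in\mathbb{A}$. $L_y:x\mapsto yx$. $\mathbb{A}_c(\lambda)$ denotes the $\lambda$-eigenspace of $L_c$. *)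

theory Defs
  imports Main "HOL.Vector_Spaces"
begin

text \<open>Bilinearity of mult: linear in the second argument for each fixed first argument,
  which together with commutativity gives bilinearity.\<close>
definition comm_fd_algebra :: "('k::field \<Rightarrow> 'v::ab_group_add \<Rightarrow> 'v) \<Rightarrow> ('v \<Rightarrow> 'v \<Rightarrow> 'v) \<Rightarrow> bool" where
  "comm_fd_algebra smul mult \<longleftrightarrow>
     vector_space smul \<and>
     (\<exists>B. finite B \<and> module.span smul B = UNIV) \<and>
     (\<forall>x. Vector_Spaces.linear smul smul (mult x)) \<and>
     (\<forall>x y. mult x y = mult y x)"

definition medial :: "('v \<Rightarrow> 'v \<Rightarrow> 'v) \<Rightarrow> bool" where
  "medial mult \<longleftrightarrow> (\<forall>x y z w. mult (mult x y) (mult z w) = mult (mult x z) (mult y w))"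

definition idempotent_elt :: "('v \<Rightarrow> 'v \<Rightarrow> 'v) \<Rightarrow> 'v \<Rightarrow> bool" where
  "idempotent_elt mult c \<longleftrightarrow> mult c c = c"

definition eigenspace_L :: "('k \<Rightarrow> 'v \<Rightarrow> 'v) \<Rightarrow> ('v \<Rightarrow> 'v \<Rightarrow> 'v) \<Rightarrow> 'v \<Rightarrow> 'k \<Rightarrow> 'v set" where
  "eigenspace_L smul mult c lam = {x. mult c x = smul lam x}"

definition subalgebra :: "('k::field \<Rightarrow> 'v::ab_group_add \<Rightarrow> 'v) \<Rightarrow> ('v \<Rightarrow> 'v \<Rightarrow> 'v) \<Rightarrow> 'v set \<Rightarrow> bool" where
  "subalgebra smul mult S \<longleftrightarrow> module.subspace smul S \<and> (\<forall>x\<in>S. \<forall>y\<in>S. mult x y \<in> S)"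

definition ideal_alg :: "('k::field \<Rightarrow> 'v::ab_group_add \<Rightarrow> 'v) \<Rightarrow> ('v \<Rightarrow> 'v \<Rightarrow> 'v) \<Rightarrow> 'v set \<Rightarrow> bool" where
  "ideal_alg smul mult I \<longleftrightarrow> module.subspace smul I \<and>
     (\<forall>a x. x \<in> I \<longrightarrow> mult a x \<in> I \<and> mult x a \<in> I)"

end

theory Submission
  imports Defs
begin

lemma fd_exists:
  assumes "vector_space smul" "finite B" "module.span smul B = UNIV"
  shows "\<exists>B'. finite_dimensional_vector_space smul B'"
proof -
  interpret vector_space smul by fact
  obtain B' where "independent B'" "B' \<subseteq> B" "B \<subseteq> span B'"
    using maximal_independent_subset[of B] by force
  hence "span B' = UNIV" using assms(3)
    by (metis span_mono span_span top.extremum_uniqueI)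
  moreover have "finite B'" using \<open>B' \<subseteq> B\<close> assms(2) finite_subset by blast
  ultimately show ?thesis using \<open>independent B'\<close>
    by (metis finite_dimensional_vector_space.intro finite_dimensional_vector_space_axioms.intro assms(1))
qed

theorem proposition3p5:
  fixes smul :: "'k::field \<Rightarrow> 'v::ab_group_add \<Rightarrow> 'v"
    and mult :: "'v \<Rightarrow> 'v \<Rightarrow> 'v"
    and c :: 'v
  assumes alg: "comm_fd_algebra smul mult"
    and med: "medial mult"
    and char2: "(2::'k) \<noteq> 0" and char3: "(3::'k) \<noteq> 0"
    and c_idem: "idempotent_elt mult c" and c_nz: "c \<noteq> 0"
  shows "(\<forall>x y. mult c (mult x y) = mult (mult c x) (mult c y))
    \<and> eigenspace_L smul mult c 0 = {x. mult c x = 0}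
    \<and> ideal_alg smul mult (eigenspace_L smul mult c 0)
    \<and> subalgebra smul mult (range (mult c))
    \<and> eigenspace_L smul mult c 1 = {x. mult c x = x}
    \<and> eigenspace_L smul mult c 1 \<subseteq> range (mult c)
    \<and> subalgebra smul mult (eigenspace_L smul mult c 1)
    \<and> vector_space.dim smul (eigenspace_L smul mult c 1) \<ge> 1
    \<and> (\<forall>c1 c2. idempotent_elt mult c1 \<and> c1 \<noteq> 0 \<and> idempotent_elt mult c2 \<and> c2 \<noteq> 0 \<longrightarrow>
          (\<forall>x. mult c2 (mult c1 x) = mult (mult c2 c1) (mult c2 x)))"
proof -
  have vs: "vector_space smul" and lin: "\<And>x. Vector_Spaces.linear smul smul (mult x)"
    and comm: "\<And>x y. mult x y = mult y x"
    and fin: "\<exists>B. finite B \<and> module.span smul B = UNIV"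
    using alg unfolding comm_fd_algebra_def by auto
  interpret vector_space smul by (rule vs)
  interpret lc: Vector_Spaces.linear smul smul "mult c" by (rule lin)
  have md: "\<And>x y z w. mult (mult x y) (mult z w) = mult (mult x z) (mult y w)"
    using med unfolding medial_def by blast
  have cc: "mult c c = c" using c_idem unfolding idempotent_elt_def .
  have m0: "\<And>y. mult y 0 = 0"
  proof -
    fix y
    interpret ly: Vector_Spaces.linear smul smul "mult y" by (rule lin)
    show "mult y 0 = 0" by simp
  qed
  have A: "\<forall>x y. mult c (mult x y) = mult (mult c x) (mult c y)"
    by (metis cc md)
  have E0: "eigenspace_L smul mult c 0 = {x. mult c x = 0}"
    unfolding eigenspace_L_def by simp
  have E1: "eigenspace_L smul mult c 1 = {x. mult c x = x}"
    unfolding eigenspace_L_def by simp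
  have sk: "subspace {x. mult c x = 0}"
    using lc.zero lc.add lc.scale by (simp add: subspace_def)
  have I: "ideal_alg smul mult (eigenspace_L smul mult c 0)"
    unfolding ideal_alg_def E0 using sk A m0 comm by (metis (mono_tags, lifting) mem_Collect_eq)
  have sr: "subspace (range (mult c))"
    using lc.subspace_image[OF subspace_UNIV] by simp
  have S: "subalgebra smul mult (range (mult c))"
    unfolding subalgebra_def
  proof (intro conjI ballI)
    fix x y assume "x \<in> range (mult c)" "y \<in> range (mult c)"
    then obtain a b where "x = mult c a" "y = mult c b" by blast
    hence "mult x y = mult c (mult a b)" using A by simp
    thus "mult x y \<in> range (mult c)" by simp
  qed (rule sr)
  have s1: "subspace {x. mult c x = x}"
    using lc.zero lc.add lc.scale by (simp add: subspace_def)
  have S1: "subalgebra smul mult (eigenspace_L smul mult c 1)"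
    unfolding subalgebra_def E1 using s1 A by auto
  have sub: "eigenspace_L smul mult c 1 \<subseteq> range (mult c)"
    unfolding E1 by (metis (mono_tags, lifting) mem_Collect_eq rangeI subsetI)
  obtain B' where fd: "finite_dimensional_vector_space smul B'"
    using fd_exists[OF vs] fin by blast
  have D: "dim (eigenspace_L smul mult c 1) \<ge> 1"
  proof -
    have "c \<in> eigenspace_L smul mult c 1" unfolding E1 using cc by simp
    hence "\<not> eigenspace_L smul mult c 1 \<subseteq> {0}" using c_nz by blast
    hence "dim (eigenspace_L smul mult c 1) \<noteq> 0"
      using finite_dimensional_vector_space.dim_eq_0[OF fd] by blast
    thus ?thesis by simp
  qed
  have Ee: "\<forall>c1 c2. idempotent_elt mult c1 \<and> c1 \<noteq> 0 \<and> idempotent_elt mult c2 \<and> c2 \<noteq> 0 \<longrightarrow>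
          (\<forall>x. mult c2 (mult c1 x) = mult (mult c2 c1) (mult c2 x))"
    unfolding idempotent_elt_def by (metis md)
  show ?thesis using A E0 I S E1 sub S1 D Ee by blast
qed

end
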